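(* Suppose that $\nabla^2\Phi(\tilde{\mathbf{x}})$ is positive definite for every $\tilde{\mathbf{x}}\in\Delta$. Then a point $\mathbf{x}\in\Delta$ is a local maximizer of the problem $\max\{f(\mathbf{x}):\mathbf{x}\in\Delta\}$ if and only if $\mathbf{x}=\mathbf{x}(C)$ for some maximal clique $C$ of $G$. Moreover, every local maximizer of this problem is strict.
   Context: Let $G=(\mathcal{V},\mathcal{E})$ be a simple undirected graph on vertex set $\mathcal{V}=\{1,\dots,n\}$ with adjacency matrix $\mathbf{A}=(a_{ij})$ ($a_{ij}=1$ if $(i,j)\in\mathcal{E}$, else $0$; $a_{ii}=0$). A clique is a subset $C\subseteq\mathcal{V}$ with $(i,j)\in\mathcal{E}$ for all distinct $i,j\in C$; it is maximal if it is not strictly contained in another clique. Let $\Delta=\{\mathbf{x}\in\mathbb{R}^n:\mathbf{0}\le\mathbf{x}\le\mathbf{1},\ \mathbf{1}^{\mathsf T}\mathbf{x}=1\}$. For a non-empty clique $C$, $\mathbf{x}(C)\in\Delta$ has $x(C)_i=1/|C|$ for $i\in C$ and $0$ otherwise. For $\mathbf{x}\in\Delta$, $\mathcal{P}(\mathbf{x})$ is the set of vectors in $\Delta$ obtained by permuting the coordinates of $\mathbf{x}$. Let $\Phi:X\to\mathbb{R}$ be twice continuously differentiable on an open set $X\supset\Delta$, satisfying for every $\mathbf{x}\in\Delta$: (C1) $\nabla^2\Phi(\mathbf{x})$ is positive semidefinite; (C2) $\|\nabla^2\Phi(\mathbf{x})\|_2<2$; (C3) $\Phi$ is constant on $\mathcal{P}(\mathbf{x})$.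 Define $f(\mathbf{x})=\mathbf{x}^{\mathsf T}\mathbf{A}\mathbf{x}+\Phi(\mathbf{x})$. A point $\mathbf{x}\in\Delta$ is a (strict) local maximizer if there is $\epsilon>0$ with $f(\mathbf{x})\ge f(\tilde{\mathbf{x}})$ (resp. $>$) for all $\tilde{\mathbf{x}}\in\Delta$ with $0<\|\tilde{\mathbf{x}}-\mathbf{x}\|_2<\epsilon$. *)

theory Defs
  imports "HOL-Analysis.Analysis"
begin

text \<open>Vertices are the elements of a finite type 'n (standing for {1..n});
  the graph is given by a symmetric, irreflexive edge relation E.\<close>

definition simple_graph :: "('n \<Rightarrow> 'n \<Rightarrow> bool) \<Rightarrow> bool" where
  "simple_graph E \<longleftrightarrow> (\<forall>i j. E i j = E j i) \<and> (\<forall>i. \<not> E i i)"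

definition adj_matrix :: "('n::finite \<Rightarrow> 'n \<Rightarrow> bool) \<Rightarrow> real^'n^'n" where
  "adj_matrix E = (\<chi> i j. if E i j then 1 else 0)"

definition is_clique :: "('n \<Rightarrow> 'n \<Rightarrow> bool) \<Rightarrow> 'n set \<Rightarrow> bool" where
  "is_clique E C \<longleftrightarrow> (\<forall>i\<in>C. \<forall>j\<in>C. i \<noteq> j \<longrightarrow> E i j)"

definition maximal_clique :: "('n \<Rightarrow> 'n \<Rightarrow> bool) \<Rightarrow> 'n set \<Rightarrow> bool" where
  "maximal_clique E C \<longleftrightarrow> is_clique E C \<and> \<not> (\<exists>D. is_clique E D \<and> C \<subset> D)"

definition std_simplex :: "(real^'n::finite) set" where
  "std_simplex = {x. (\<forall>i. 0 \<le> x$i \<and> x$i \<le> 1) \<and> (\<Sum>i\<in>UNIV. x$i) = 1}"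

definition clique_vec :: "'n set \<Rightarrow> real^'n::finite" where
  "clique_vec C = (\<chi> i. if i \<in> C then 1 / real (card C) else 0)"

definition perm_vec :: "('n \<Rightarrow> 'n) \<Rightarrow> real^'n::finite \<Rightarrow> real^'n" where
  "perm_vec \<sigma> x = (\<chi> i. x $ (\<sigma> i))"

definition local_max_on :: "(real^'n::finite \<Rightarrow> real) \<Rightarrow> (real^'n) set \<Rightarrow> real^'n \<Rightarrow> bool" where
  "local_max_on f S x \<longleftrightarrow> x \<in> S \<and>
     (\<exists>e>0. \<forall>y\<in>S. 0 < norm (y - x) \<and> norm (y - x) < e \<longrightarrow> f x \<ge> f y)"

definition strict_local_max_on :: "(real^'n::finite \<Rightarrow> real) \<Rightarrow> (real^'n) set \<Rightarrow> real^'n \<Rightarrow> bool" where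
  "strict_local_max_on f S x \<longleftrightarrow> x \<in> S \<and>
     (\<exists>e>0. \<forall>y\<in>S. 0 < norm (y - x) \<and> norm (y - x) < e \<longrightarrow> f x > f y)"

end

theory Submission imports Defs "HOL-Combinatorics.Permutations"
begin

locale P5 =
  fixes E :: "'n::finite \<Rightarrow> 'n \<Rightarrow> bool"
    and \<Phi> :: "real^'n \<Rightarrow> real"
    and X :: "(real^'n) set"
    and grad :: "real^'n \<Rightarrow> real^'n"
    and hess :: "real^'n \<Rightarrow> real^'n^'n"
  assumes graph: "simple_graph E"
    and X_sup: "std_simplex \<subseteq> X"
    and grad: "\<And>x. x \<in> X \<Longrightarrow> (\<Phi> has_derivative (\<lambda>h. grad x \<bullet> h)) (at x)"
    and hess: "\<And>x. x \<in> X \<Longrightarrow> (grad has_derivative (\<lambda>h. hess x *v h)) (at x)"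
    and C2: "\<And>x. x \<in> std_simplex \<Longrightarrow> onorm (\<lambda>v. hess x *v v) < 2"
    and C3: "\<And>x \<sigma>. x \<in> std_simplex \<Longrightarrow> \<sigma> permutes (UNIV :: 'n set) \<Longrightarrow>
               \<Phi> (perm_vec \<sigma> x) = \<Phi> x"
    and posdef: "\<And>x v. x \<in> std_simplex \<Longrightarrow> v \<noteq> 0 \<Longrightarrow> v \<bullet> (hess x *v v) > 0"
begin

lemma simplex_seg:
  assumes "x \<in> std_simplex" "y \<in> std_simplex" "0 \<le> t" "t \<le> 1"
  shows "x + t *\<^sub>R (y - x) \<in> std_simplex"
proof -
  have "\<forall>i. 0 \<le> (x + t *\<^sub>R (y - x))$i \<and> (x + t *\<^sub>R (y - x))$i \<le> 1"
  proof
    fix i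
    have a: "0 \<le> x$i" "x$i \<le> 1" "0 \<le> y$i" "y$i \<le> 1" using assms(1,2) by (auto simp: std_simplex_def)
    have "(x + t *\<^sub>R (y - x))$i = (1-t) * x$i + t * y$i" by (simp add: algebra_simps)
    moreover have "0 \<le> (1-t) * x$i + t * y$i" using a assms by simp
    moreover have "(1-t) * x$i + t * y$i \<le> (1-t) * 1 + t * 1"
      using a assms by (intro add_mono mult_left_mono) auto
    ultimately show "0 \<le> (x + t *\<^sub>R (y - x))$i \<and> (x + t *\<^sub>R (y - x))$i \<le> 1" by simp
  qed
  moreover have "(\<Sum>i\<in>UNIV. (x + t *\<^sub>R (y - x))$i) = 1"
    using assms(1,2) by (simp add: std_simplex_def sum.distrib sum_subtractf sum_distrib_left[symmetric])
  ultimately show ?thesis by (simp add: std_simplex_def)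
qed

lemma taylor:
  assumes x: "x \<in> std_simplex" and y: "y \<in> std_simplex"
  shows "\<exists>\<xi>\<in>std_simplex. \<Phi> y = \<Phi> x + grad x \<bullet> (y - x) + ((y - x) \<bullet> (hess \<xi> *v (y - x))) / 2"
proof -
  define d where "d = y - x"
  define h0 where "h0 = (\<lambda>t::real. \<Phi> (x + t *\<^sub>R d))"
  define h1 where "h1 = (\<lambda>t::real. grad (x + t *\<^sub>R d) \<bullet> d)"
  define h2 where "h2 = (\<lambda>t::real. d \<bullet> (hess (x + t *\<^sub>R d) *v d))"
  define diff where "diff = (\<lambda>m::nat. if m = 0 then h0 else if m = 1 then h1 else h2)"
  have inX: "x + t *\<^sub>R d \<in> X" if "0 \<le> t" "t \<le> 1" for t
    using simplex_seg[OF x y that] X_sup d_def by auto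
  have lin: "((\<lambda>t::real. x + t *\<^sub>R d) has_derivative (\<lambda>h. h *\<^sub>R d)) (at t)" for t
    by (auto intro!: derivative_eq_intros)
  have D0: "DERIV h0 t :> h1 t" if "0 \<le> t" "t \<le> 1" for t
  proof -
    have "(h0 has_derivative ((\<lambda>h. grad (x + t *\<^sub>R d) \<bullet> h) \<circ> (\<lambda>h. h *\<^sub>R d))) (at t)"
      unfolding h0_def using has_derivative_compose[OF lin grad[OF inX[OF that]]]
      by (simp add: o_def)
    moreover have "(\<lambda>h. grad (x + t *\<^sub>R d) \<bullet> h) \<circ> (\<lambda>h. h *\<^sub>R d) = (*) (h1 t)"
      by (auto simp: h1_def fun_eq_iff)
    ultimately show ?thesis unfolding has_field_derivative_def by simp
  qed
  have D1: "DERIV h1 t :> h2 t" if "0 \<le> t" "t \<le> 1" for t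
  proof -
    have "((\<lambda>t. grad (x + t *\<^sub>R d)) has_derivative ((\<lambda>h. hess (x + t *\<^sub>R d) *v h) \<circ> (\<lambda>h. h *\<^sub>R d))) (at t)"
      using has_derivative_compose[OF lin hess[OF inX[OF that]]] by (simp add: o_def)
    then have "((\<lambda>t. grad (x + t *\<^sub>R d) \<bullet> d) has_derivative (\<lambda>h. ((hess (x + t *\<^sub>R d) *v (h *\<^sub>R d))) \<bullet> d)) (at t)"
      by (auto intro!: derivative_eq_intros simp: o_def)
    moreover have "(\<lambda>h. ((hess (x + t *\<^sub>R d) *v (h *\<^sub>R d))) \<bullet> d) = (*) (h2 t)"
      by (auto simp: h2_def fun_eq_iff matrix_vector_mult_scaleR inner_commute)
    ultimately show ?thesis unfolding has_field_derivative_def h1_def by simp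
  qed
  have "\<exists>t::real. 0 < t \<and> t < 1 \<and>
    h0 1 = (\<Sum>m<2. (diff m 0 / fact m) * (1 - 0)^m) + (diff 2 t / fact 2) * (1 - 0)^2"
    by (rule Taylor_up[where diff=diff]) (auto simp: diff_def D0 D1 less_2_cases_iff)
  then obtain t where t: "0 < t" "t < 1" "h0 1 = h0 0 + h1 0 + h2 t / 2"
    by (auto simp: diff_def numeral_2_eq_2)
  show ?thesis
    using t simplex_seg[OF x y, of t] unfolding h0_def h1_def h2_def d_def
    by (intro bexI[of _ "x + t *\<^sub>R (y - x)"]) auto
qed

lemma P1:
  assumes x: "x \<in> std_simplex" and y: "y \<in> std_simplex" and ne: "y \<noteq> x"
  shows "\<Phi> y > \<Phi> x + grad x \<bullet> (y - x)"
proof -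
  obtain \<xi> where "\<xi> \<in> std_simplex" and eq: "\<Phi> y = \<Phi> x + grad x \<bullet> (y - x) + ((y - x) \<bullet> (hess \<xi> *v (y - x))) / 2"
    using taylor[OF x y] by blast
  moreover have "(y - x) \<bullet> (hess \<xi> *v (y - x)) > 0" using posdef[OF \<open>\<xi> \<in> std_simplex\<close>] ne by simp
  ultimately show ?thesis by simp
qed

lemma hess_bound:
  assumes "\<xi> \<in> std_simplex" "v \<noteq> 0"
  shows "v \<bullet> (hess \<xi> *v v) < 2 * (v \<bullet> v)"
proof -
  have "v \<bullet> (hess \<xi> *v v) \<le> norm v * norm (hess \<xi> *v v)" using norm_cauchy_schwarz by blast
  also have "\<dots> \<le> norm v * (onorm (\<lambda>v. hess \<xi> *v v) * norm v)"
    by (intro mult_left_mono onorm) auto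
  also have "\<dots> < norm v * (2 * norm v)"
    using C2[OF assms(1)] assms(2) by (intro mult_strict_left_mono) auto
  also have "\<dots> = 2 * (v \<bullet> v)" by (simp add: power2_norm_eq_inner[symmetric] power2_eq_square)
  finally show ?thesis .
qed

lemma P2:
  assumes x: "x \<in> std_simplex" and y: "y \<in> std_simplex" and ne: "y \<noteq> x"
  shows "\<Phi> y < \<Phi> x + grad x \<bullet> (y - x) + (y - x) \<bullet> (y - x)"
proof -
  obtain \<xi> where "\<xi> \<in> std_simplex" and eq: "\<Phi> y = \<Phi> x + grad x \<bullet> (y - x) + ((y - x) \<bullet> (hess \<xi> *v (y - x))) / 2"
    using taylor[OF x y] by blast
  moreover have "(y - x) \<bullet> (hess \<xi> *v (y - x)) < 2 * ((y - x) \<bullet> (y - x))"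
    using hess_bound[OF \<open>\<xi> \<in> std_simplex\<close>] ne by simp
  ultimately show ?thesis by simp
qed

lemma P2':
  assumes x: "x \<in> std_simplex" and y: "y \<in> std_simplex"
  shows "\<Phi> y \<le> \<Phi> x + grad x \<bullet> (y - x) + (y - x) \<bullet> (y - x)"
  using P2[OF x y] by (cases "y = x") auto

definition aa :: "'n \<Rightarrow> 'n \<Rightarrow> real" where "aa i j = (if E i j then 1 else 0)"

lemma aa_sym: "aa i j = aa j i" and aa_diag: "aa i i = 0"
  using graph by (auto simp: aa_def simple_graph_def)

lemma quad_sum: "u \<bullet> (adj_matrix E *v v) = (\<Sum>i\<in>UNIV. \<Sum>j\<in>UNIV. u$i * aa i j * v$j)"
  by (simp add: inner_vec_def matrix_vector_mult_def adj_matrix_def aa_def sum_distrib_left mult.assoc)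

lemma quad_symm: "u \<bullet> (adj_matrix E *v v) = v \<bullet> (adj_matrix E *v u)"
  unfolding quad_sum
  by (subst sum.swap) (simp add: aa_sym mult.commute mult.left_commute)

definition ff where "ff x = x \<bullet> (adj_matrix E *v x) + \<Phi> x"
definition gf where "gf x = 2 *\<^sub>R (adj_matrix E *v x) + grad x"

lemma expand:
  "ff y = ff x + gf x \<bullet> (y - x) + (y - x) \<bullet> (adj_matrix E *v (y - x))
          + (\<Phi> y - \<Phi> x - grad x \<bullet> (y - x))"
proof -
  have "y = x + (y - x)" by simp
  then have "y \<bullet> (adj_matrix E *v y) = (x + (y - x)) \<bullet> (adj_matrix E *v (x + (y - x)))" by simp
  also have "\<dots> = x \<bullet> (adj_matrix E *v x) + x \<bullet> (adj_matrix E *v (y - x)) + (y - x) \<bullet> (adj_matrix E *v x)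
       + (y - x) \<bullet> (adj_matrix E *v (y - x))"
    by (simp only: matrix_vector_right_distrib inner_add_left inner_add_right add.assoc)
  also have "x \<bullet> (adj_matrix E *v (y - x)) = (y - x) \<bullet> (adj_matrix E *v x)" by (rule quad_symm)
  finally show ?thesis
    by (simp add: ff_def gf_def inner_add_left algebra_simps inner_commute)
qed

definition supp_in :: "real^'n \<Rightarrow> 'n set \<Rightarrow> bool" where
  "supp_in x T \<longleftrightarrow> (\<forall>k. k \<notin> T \<longrightarrow> x$k = 0)"

lemma inner_self_sum: "d \<bullet> d = (\<Sum>i\<in>UNIV. d$i * d$i)"
  by (simp add: inner_vec_def)

lemma quad_clique:
  assumes cl: "is_clique E T" and s: "supp_in d T"
  shows "d \<bullet> (adj_matrix E *v d) = (\<Sum>i\<in>UNIV. d$i)^2 - d \<bullet> d"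
proof -
  have pw: "d$i * aa i j * d$j = d$i * d$j - (if i = j then d$i * d$j else 0)" for i j
  proof (cases "d$i = 0 \<or> d$j = 0")
    case True then show ?thesis by auto
  next
    case False
    then have "i \<in> T" "j \<in> T" using s by (auto simp: supp_in_def)
    then show ?thesis using cl aa_diag by (auto simp: is_clique_def aa_def)
  qed
  have "d \<bullet> (adj_matrix E *v d) = (\<Sum>i\<in>UNIV. \<Sum>j\<in>UNIV. d$i * d$j - (if i = j then d$i * d$j else 0))"
    unfolding quad_sum pw ..
  also have "\<dots> = (\<Sum>i\<in>UNIV. \<Sum>j\<in>UNIV. d$i * d$j) - (\<Sum>i\<in>UNIV. d$i * d$i)"
    by (simp add: sum_subtractf)
  also have "(\<Sum>i\<in>UNIV. \<Sum>j\<in>UNIV. d$i * d$j) = (\<Sum>i\<in>UNIV. d$i)^2"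
    by (simp add: power2_eq_square sum_product)
  finally show ?thesis by (simp add: inner_self_sum)
qed

lemma quad_zero:
  assumes "\<And>k l. d$k \<noteq> 0 \<Longrightarrow> d$l \<noteq> 0 \<Longrightarrow> \<not> E k l"
  shows "d \<bullet> (adj_matrix E *v d) = 0"
proof -
  have z: "d$i * aa i j * d$j = 0" for i j
    using assms[of i j] by (auto simp: aa_def)
  show ?thesis unfolding quad_sum z by simp
qed

lemma simplex_sum: "x \<in> std_simplex \<Longrightarrow> (\<Sum>i\<in>UNIV. x$i) = 1"
  and simplex_nonneg: "x \<in> std_simplex \<Longrightarrow> 0 \<le> x$i"
  by (auto simp: std_simplex_def)

lemma simplex_diff_sum: "x \<in> std_simplex \<Longrightarrow> y \<in> std_simplex \<Longrightarrow> (\<Sum>i\<in>UNIV. (y - x)$i) = 0"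
  by (simp add: sum_subtractf simplex_sum)

lemma supp_diff: "supp_in x T \<Longrightarrow> supp_in y T \<Longrightarrow> supp_in (y - x) T"
  by (simp add: supp_in_def)

lemma LF:
  assumes cl: "is_clique E T" and u: "u \<in> std_simplex" and v: "v \<in> std_simplex"
    and su: "supp_in u T" and sv: "supp_in v T" and ne: "u \<noteq> v"
  shows "ff v < ff u + gf u \<bullet> (v - u)"
proof -
  have q: "(v - u) \<bullet> (adj_matrix E *v (v - u)) = - ((v - u) \<bullet> (v - u))"
    using quad_clique[OF cl supp_diff[OF su sv]] simplex_diff_sum[OF u v] by simp
  show ?thesis using expand[of v u] q P2[OF u v] ne by auto
qed

lemma LFU:
  assumes lm: "local_max_on ff std_simplex x" and cl: "is_clique E T" and sx: "supp_in x T"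
    and v: "v \<in> std_simplex" and sv: "supp_in v T" and ne: "v \<noteq> x"
  shows "ff v < ff x"
proof (rule ccontr)
  assume H: "\<not> ff v < ff x"
  from lm obtain e where x: "x \<in> std_simplex" and e: "e > 0"
    and le: "\<And>y. y \<in> std_simplex \<Longrightarrow> 0 < norm (y - x) \<Longrightarrow> norm (y - x) < e \<Longrightarrow> ff x \<ge> ff y"
    by (auto simp: local_max_on_def)
  have nv: "norm (v - x) > 0" using ne by simp
  define t where "t = min (1/2) (e / (2 * norm (v - x)))"
  have t0: "0 < t" and t1: "t < 1" using e nv by (auto simp: t_def)
  have tn: "t * norm (v - x) < e"
  proof -
    have "t * norm (v - x) \<le> (e / (2 * norm (v - x))) * norm (v - x)"
      by (intro mult_right_mono) (auto simp: t_def)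
    also have "\<dots> = e / 2" using nv by (simp add: field_simps)
    finally show ?thesis using e by simp
  qed
  define y where "y = x + t *\<^sub>R (v - x)"
  have y: "y \<in> std_simplex" unfolding y_def using simplex_seg[OF x v] t0 t1 by simp
  have sy: "supp_in y T" using sx sv by (simp add: supp_in_def y_def)
  have yx: "y - x = t *\<^sub>R (v - x)" by (simp add: y_def)
  have ny: "norm (y - x) = t * norm (v - x)" using t0 by (simp add: yx)
  have yne: "y \<noteq> x" using ny t0 nv by auto
  have fy: "ff y \<le> ff x" using le[OF y] ny t0 nv tn by simp
  have i1: "ff x < ff y + gf y \<bullet> (x - y)" using LF[OF cl y x sy sx] yne by simp
  have vne: "y \<noteq> v"
  proof
    assume "y = v"
    then have "(1 - t) *\<^sub>R (v - x) = 0" by (auto simp: y_def algebra_simps)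
    then show False using t1 ne by auto
  qed
  have i2: "ff v < ff y + gf y \<bullet> (v - y)" using LF[OF cl y v sy sv vne] .
  have xy: "x - y = (- t) *\<^sub>R (v - x)" by (simp add: y_def)
  have vy: "v - y = (1 - t) *\<^sub>R (v - x)" by (simp add: y_def algebra_simps)
  have "(1 - t) * ff x + t * ff v < (1 - t) * (ff y + gf y \<bullet> (x - y)) + t * (ff y + gf y \<bullet> (v - y))"
  proof -
    have "(1 - t) * ff x \<le> (1 - t) * (ff y + gf y \<bullet> (x - y))"
      using i1 t1 by (intro mult_left_mono) auto
    moreover have "t * ff v < t * (ff y + gf y \<bullet> (v - y))"
      using i2 t0 by simp
    ultimately show ?thesis by linarith
  qed
  also have "\<dots> = ff y" unfolding xy vy by (simp add: algebra_simps)
  finally have "(1 - t) * ff x + t * ff v < ff y" .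
  then have "t * ff v < t * ff x" using fy by (simp add: algebra_simps)
  then have "ff v < ff x" using t0 by simp
  then show False using H by simp
qed

lemma perm_vec_nth: "perm_vec \<sigma> x $ k = x $ (\<sigma> k)"
  by (simp add: perm_vec_def)

lemma Sym:
  assumes cl: "is_clique E T" and ij: "i \<in> T" "j \<in> T" and x: "x \<in> std_simplex" and sx: "supp_in x T"
  defines "p \<equiv> perm_vec (Transposition.transpose i j) x"
  shows "p \<in> std_simplex" "supp_in p T" "ff p = ff x"
proof -
  have pm: "Transposition.transpose i j permutes (UNIV :: 'n set)" by (rule permutes_swap_id) auto
  have sumeq: "(\<Sum>k\<in>UNIV. g (p$k)) = (\<Sum>k\<in>UNIV. g (x$k))" for g :: "real \<Rightarrow> real"
    unfolding p_def perm_vec_nth using sum.permute[OF pm, of "\<lambda>k. g (x$k)"] by (simp add: o_def)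
  show p: "p \<in> std_simplex"
    using x sumeq[of "\<lambda>r. r"] by (auto simp: std_simplex_def p_def perm_vec_nth)
  show sp: "supp_in p T"
    using sx ij by (auto simp: supp_in_def p_def perm_vec_nth Transposition.transpose_def)
  have "p \<bullet> (adj_matrix E *v p) = x \<bullet> (adj_matrix E *v x)"
    unfolding quad_clique[OF cl sp] quad_clique[OF cl sx] inner_self_sum
    using sumeq[of "\<lambda>r. r"] sumeq[of "\<lambda>r. r * r"] by simp
  moreover have "\<Phi> p = \<Phi> x" unfolding p_def by (rule C3[OF x pm])
  ultimately show "ff p = ff x" by (simp add: ff_def)
qed

lemma simplex_intro: "(\<And>k. 0 \<le> y$k) \<Longrightarrow> (\<Sum>k\<in>UNIV. y$k) = 1 \<Longrightarrow> y \<in> std_simplex"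
proof -
  assume a: "\<And>k. 0 \<le> y$k" "(\<Sum>k\<in>UNIV. y$k) = 1"
  have "y$k \<le> 1" for k
  proof -
    have "y$k \<le> (\<Sum>k\<in>UNIV. y$k)" by (rule member_le_sum) (auto simp: a)
    then show ?thesis using a by simp
  qed
  then show ?thesis using a by (auto simp: std_simplex_def)
qed

lemma A1:
  assumes lm: "local_max_on ff std_simplex x"
  shows "is_clique E {i. x$i \<noteq> 0}"
proof (rule ccontr)
  assume "\<not> is_clique E {i. x$i \<noteq> 0}"
  then obtain i j where ij: "x$i \<noteq> 0" "x$j \<noteq> 0" "i \<noteq> j" "\<not> E i j"
    by (auto simp: is_clique_def)
  from lm obtain e where x: "x \<in> std_simplex" and e: "e > 0"
    and le: "\<And>y. y \<in> std_simplex \<Longrightarrow> 0 < norm (y - x) \<Longrightarrow> norm (y - x) < e \<Longrightarrow> ff x \<ge> ff y"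
    by (auto simp: local_max_on_def)
  have xi: "x$i > 0" "x$j > 0" using ij simplex_nonneg[OF x] by (auto simp: order_le_less)
  define w :: "real^'n" where "w = axis i 1 - axis j 1"
  have wk: "w$k = (if k = i then 1 else 0) - (if k = j then 1 else 0)" for k
    by (simp add: w_def axis_def)
  have wi: "w$i = 1" using wk[of i] ij by simp
  have w0: "w \<noteq> 0" proof assume "w = 0" then show False using wi by simp qed
  have nw: "norm w \<le> 2"
  proof -
    have "norm w \<le> norm (axis i (1::real)) + norm (axis j (1::real))" unfolding w_def by (rule norm_triangle_ineq4)
    then show ?thesis by simp
  qed
  have sw: "(\<Sum>k\<in>UNIV. w$k) = 0" by (simp add: wk sum_subtractf)
  define t where "t = min (min (x$i) (x$j)) (e / 4)"
  have t0: "t > 0" using xi e by (simp add: t_def)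
  have ti: "t \<le> x$i" "t \<le> x$j" "t \<le> e/4" by (auto simp: t_def)
  have qz: "(s *\<^sub>R w) \<bullet> (adj_matrix E *v (s *\<^sub>R w)) = 0" for s
  proof (rule quad_zero)
    fix k l assume "(s *\<^sub>R w)$k \<noteq> 0" "(s *\<^sub>R w)$l \<noteq> 0"
    then have "k \<in> {i, j}" "l \<in> {i, j}" by (auto simp: wk split: if_splits)
    then show "\<not> E k l" using ij graph by (auto simp: simple_graph_def)
  qed
  have key: "ff (x + s *\<^sub>R w) > ff x + s * (gf x \<bullet> w) \<and> ff (x + s *\<^sub>R w) \<le> ff x"
    if s: "\<bar>s\<bar> = t" for s
  proof -
    have y: "x + s *\<^sub>R w \<in> std_simplex"
    proof (rule simplex_intro)
      fix k
      show "0 \<le> (x + s *\<^sub>R w)$k"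
        using simplex_nonneg[OF x, of k] ti s by (auto simp: wk abs_if split: if_splits)
    next
      show "(\<Sum>k\<in>UNIV. (x + s *\<^sub>R w)$k) = 1"
        using simplex_sum[OF x] sw by (simp add: sum.distrib sum_distrib_left[symmetric])
    qed
    have ne: "x + s *\<^sub>R w \<noteq> x" using w0 s t0 by auto
    have "norm ((x + s *\<^sub>R w) - x) = t * norm w" using s by simp
    moreover have "t * norm w < e"
    proof -
      have "t * norm w \<le> (e/4) * 2" using ti nw t0 by (intro mult_mono) auto
      then show ?thesis using e by simp
    qed
    ultimately have "ff (x + s *\<^sub>R w) \<le> ff x" using le[OF y] ne t0 w0 by simp
    moreover have "ff (x + s *\<^sub>R w) > ff x + s * (gf x \<bullet> w)"
    proof -
      have "ff (x + s *\<^sub>R w) = ff x + gf x \<bullet> (s *\<^sub>R w) + (\<Phi> (x + s *\<^sub>R w) - \<Phi> x - grad x \<bullet> (s *\<^sub>R w))"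
        using expand[of "x + s *\<^sub>R w" x] qz[of s] by simp
      then show ?thesis using P1[OF x y ne] by simp
    qed
    ultimately show ?thesis by simp
  qed
  have "\<bar>t\<bar> = t" "\<bar>-t\<bar> = t" using t0 by auto
  from key[OF this(1)] key[OF this(2)] show False by linarith
qed

lemma A2:
  assumes lm: "local_max_on ff std_simplex x" and T: "is_clique E T" and sx: "supp_in x T"
    and ij: "i \<in> T" "j \<in> T"
  shows "x$i = x$j"
proof -
  have x: "x \<in> std_simplex" using lm by (simp add: local_max_on_def)
  define p where "p = perm_vec (Transposition.transpose i j) x"
  have p: "p \<in> std_simplex" "supp_in p T" "ff p = ff x" using Sym[OF T ij x sx] by (simp_all add: p_def)
  have "p = x"
  proof (rule ccontr)
    assume "p \<noteq> x"
    then have "ff p < ff x" using LFU[OF lm T sx p(1,2)] by simp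
    then show False using p(3) by simp
  qed
  then have "p$i = x$i" by simp
  then show ?thesis by (simp add: p_def perm_vec_nth)
qed

lemma dirA:
  assumes lm: "local_max_on ff std_simplex x"
  shows "\<exists>C. maximal_clique E C \<and> x = clique_vec C"
proof -
  define S where "S = {i. x$i \<noteq> 0}"
  have x: "x \<in> std_simplex" using lm by (simp add: local_max_on_def)
  have cl: "is_clique E S" using A1[OF lm] by (simp add: S_def)
  have sx: "supp_in x S" by (simp add: supp_in_def S_def)
  have "S \<noteq> {}"
  proof
    assume "S = {}"
    then have "x = 0" by (auto simp: S_def vec_eq_iff)
    then show False using simplex_sum[OF x] by simp
  qed
  then obtain i0 where i0: "i0 \<in> S" by blast
  have eq: "x$i = x$i0" if "i \<in> S" for i using A2[OF lm cl sx that i0] .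
  have "(\<Sum>k\<in>UNIV. x$k) = (\<Sum>k\<in>S. x$k)"
    by (rule sum.mono_neutral_right) (auto simp: S_def)
  also have "\<dots> = real (card S) * x$i0" using eq by simp
  finally have cs: "real (card S) * x$i0 = 1" using simplex_sum[OF x] by simp
  have xc: "x = clique_vec S"
  proof -
    have "x$k = (if k \<in> S then 1 / real (card S) else 0)" for k
    proof (cases "k \<in> S")
      case True
      have "real (card S) \<noteq> 0" using cs by auto
      then show ?thesis using eq[OF True] cs True by (simp add: field_simps)
    next
      case False then show ?thesis by (simp add: S_def)
    qed
    then show ?thesis by (simp add: clique_vec_def vec_eq_iff)
  qed
  have "maximal_clique E S"
  proof (unfold maximal_clique_def, intro conjI notI cl)
    assume "\<exists>D. is_clique E D \<and> S \<subset> D"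
    then obtain D k where D: "is_clique E D" "S \<subset> D" "k \<in> D" "k \<notin> S" by blast
    have "supp_in x D" using sx D(2) by (auto simp: supp_in_def)
    then have "x$i0 = x$k" using A2[OF lm D(1) _ _ D(3)] i0 D(2) by auto
    then show False using i0 D(4) by (simp add: S_def)
  qed
  then show ?thesis using xc by blast
qed

lemma cv_nth: "clique_vec C $ k = (if k \<in> C then 1 / real (card C) else 0)"
  by (simp add: clique_vec_def)

lemma maxcl_ne: "maximal_clique E C \<Longrightarrow> C \<noteq> {}"
proof
  assume "maximal_clique E C" "C = {}"
  moreover have "is_clique E {undefined}" by (simp add: is_clique_def)
  ultimately show False by (auto simp: maximal_clique_def)
qed

lemma cv_simplex:
  assumes "C \<noteq> {}"
  shows "clique_vec C \<in> std_simplex"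
proof (rule simplex_intro)
  show "0 \<le> clique_vec C $ k" for k by (simp add: cv_nth)
  have fin: "finite C" by simp
  have "(\<Sum>k\<in>UNIV. clique_vec C $ k) = (\<Sum>k\<in>C. 1 / real (card C))"
    by (simp add: cv_nth sum.If_cases)
  also have "\<dots> = 1" using assms fin by simp
  finally show "(\<Sum>k\<in>UNIV. clique_vec C $ k) = 1" .
qed

lemma grad_sym_half:
  assumes C: "C \<noteq> {}" and ij: "i \<in> C" "j \<in> C" "i \<noteq> j"
  shows "grad (clique_vec C) $ i \<ge> grad (clique_vec C) $ j"
proof (rule ccontr)
  define x where "x = clique_vec C"
  define N where "N = real (card C)"
  have N: "N > 0" using C by (simp add: N_def card_gt_0_iff)
  have x: "x \<in> std_simplex" using cv_simplex[OF C] by (simp add: x_def)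
  define w :: "real^'n" where "w = axis i 1 - axis j 1"
  have wk: "w$k = (if k = i then 1 else 0) - (if k = j then 1 else 0)" for k
    by (simp add: w_def axis_def)
  define G where "G = grad x \<bullet> w"
  have G: "G = grad x $ i - grad x $ j" by (simp add: G_def w_def inner_diff_right inner_axis)
  assume "\<not> grad (clique_vec C) $ i \<ge> grad (clique_vec C) $ j"
  then have Gn: "G < 0" by (simp add: G x_def)
  define t where "t = min (1 / N) (- G / 4)"
  have t0: "t > 0" using N Gn by (simp add: t_def)
  have tN: "t \<le> 1 / N" by (simp add: t_def)
  have tG: "t < - G" using Gn by (simp add: t_def)
  have sw: "(\<Sum>k\<in>UNIV. w$k) = 0" by (simp add: wk sum_subtractf)
  have xk: "x$k = (if k \<in> C then 1 / N else 0)" for k by (simp add: x_def cv_nth N_def)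
  have ins: "x + s *\<^sub>R w \<in> std_simplex" if "\<bar>s\<bar> \<le> 1 / N" for s
  proof (rule simplex_intro)
    fix k
    show "0 \<le> (x + s *\<^sub>R w)$k"
      using that ij N by (auto simp: wk xk abs_if split: if_splits)
  next
    show "(\<Sum>k\<in>UNIV. (x + s *\<^sub>R w)$k) = 1"
      using simplex_sum[OF x] sw by (simp add: sum.distrib sum_distrib_left[symmetric])
  qed
  have yp: "x + t *\<^sub>R w \<in> std_simplex" and ym: "x + (-t) *\<^sub>R w \<in> std_simplex"
    using ins[of t] ins[of "-t"] t0 tN by auto
  have w0: "w \<noteq> 0" proof assume "w = 0" then show False using wk[of i] ij by (simp add: vec_eq_iff) qed
  have perm: "perm_vec (Transposition.transpose i j) (x + t *\<^sub>R w) = x + (-t) *\<^sub>R w"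
    using ij by (auto simp: vec_eq_iff perm_vec_nth wk xk Transposition.transpose_def)
  have eqP: "\<Phi> (x + (-t) *\<^sub>R w) = \<Phi> (x + t *\<^sub>R w)"
    using C3[OF yp, of "Transposition.transpose i j"] perm permutes_swap_id[of i UNIV j] by simp
  have ww: "w \<bullet> w = 2"
    using ij by (simp add: w_def inner_diff_left inner_diff_right inner_axis_axis)
  have "\<Phi> (x + (-t) *\<^sub>R w) > \<Phi> x + grad x \<bullet> ((-t) *\<^sub>R w)"
    using P1[OF x ym] t0 w0 by simp
  moreover have "\<Phi> (x + t *\<^sub>R w) \<le> \<Phi> x + grad x \<bullet> (t *\<^sub>R w) + (t *\<^sub>R w) \<bullet> (t *\<^sub>R w)"
    using P2'[OF x yp] by simp
  ultimately have "- t * G < t * G + t * t * 2" using eqP ww by (simp add: G_def)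
  then have "t * (- G) < t * (G + t * 2)" by (simp add: algebra_simps)
  then have "- G < G + t * 2" using mult_less_cancel_left_pos[OF t0] by blast
  then show False using tG Gn by linarith
qed

lemma grad_sym:
  assumes C: "C \<noteq> {}" and ij: "i \<in> C" "j \<in> C"
  shows "grad (clique_vec C) $ i = grad (clique_vec C) $ j"
  using grad_sym_half[OF C ij] grad_sym_half[OF C ij(2,1)] by (cases "i = j") force+

lemma grad_out:
  assumes C: "C \<noteq> {}" and i: "i \<in> C" and k: "k \<notin> C"
  shows "grad (clique_vec C) $ k < grad (clique_vec C) $ i"
proof -
  define x where "x = clique_vec C"
  define N where "N = real (card C)"
  have N: "N > 0" using C by (simp add: N_def card_gt_0_iff)
  have x: "x \<in> std_simplex" using cv_simplex[OF C] by (simp add: x_def)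
  have xk: "x$l = (if l \<in> C then 1 / N else 0)" for l by (simp add: x_def cv_nth N_def)
  define p where "p = perm_vec (Transposition.transpose i k) x"
  have pm: "Transposition.transpose i k permutes (UNIV :: 'n set)" by (rule permutes_swap_id) auto
  have p: "p \<in> std_simplex"
  proof (rule simplex_intro)
    show "0 \<le> p$l" for l using simplex_nonneg[OF x] by (simp add: p_def perm_vec_nth)
    show "(\<Sum>l\<in>UNIV. p$l) = 1"
      unfolding p_def perm_vec_nth using sum.permute[OF pm, of "\<lambda>l. x$l"] simplex_sum[OF x]
      by (simp add: o_def)
  qed
  have ik: "i \<noteq> k" using i k by auto
  have pd: "(p - x) = (1 / N) *\<^sub>R (axis k 1 - axis i 1)"
    using i k ik by (auto simp: vec_eq_iff p_def perm_vec_nth xk Transposition.transpose_def axis_def)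
  have "(p - x) $ k \<noteq> 0" using pd N ik by (simp add: axis_def)
  then have pne: "p \<noteq> x" by auto
  have "\<Phi> p > \<Phi> x + grad x \<bullet> (p - x)" using P1[OF x p pne] .
  moreover have "\<Phi> p = \<Phi> x" unfolding p_def by (rule C3[OF x pm])
  ultimately have "grad x \<bullet> (p - x) < 0" by simp
  then have "(1 / N) * (grad x $ k - grad x $ i) < 0"
    by (simp add: pd inner_diff_right inner_axis)
  then show ?thesis using N by (simp add: x_def divide_less_0_iff)
qed

lemma Ax_nth: "(adj_matrix E *v clique_vec C) $ l = (\<Sum>j\<in>C. aa l j) / real (card C)"
proof -
  have "(adj_matrix E *v clique_vec C) $ l = (\<Sum>j\<in>UNIV. aa l j * clique_vec C $ j)"
    by (simp add: matrix_vector_mult_def adj_matrix_def aa_def)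
  also have "\<dots> = (\<Sum>j\<in>UNIV. if j \<in> C then aa l j * (1 / real (card C)) else 0)"
    by (intro sum.cong) (auto simp: cv_nth)
  also have "\<dots> = (\<Sum>j\<in>C. aa l j * (1 / real (card C)))"
    by (simp add: sum.If_cases)
  also have "\<dots> = (\<Sum>j\<in>C. aa l j) / real (card C)" by (simp add: sum_divide_distrib)
  finally show ?thesis .
qed

lemma aa_le1: "aa i j \<le> 1" and aa_ge0: "0 \<le> aa i j" by (auto simp: aa_def)

lemma sum_aa_in:
  assumes cl: "is_clique E C" and l: "l \<in> C"
  shows "(\<Sum>j\<in>C. aa l j) = real (card C) - 1"
proof -
  have "(\<Sum>j\<in>C. aa l j) = aa l l + (\<Sum>j\<in>C - {l}. aa l j)" using l by (simp add: sum.remove)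
  also have "(\<Sum>j\<in>C - {l}. aa l j) = (\<Sum>j\<in>C - {l}. 1)"
    using cl l by (intro sum.cong) (auto simp: aa_def is_clique_def)
  also have "\<dots> = real (card C) - 1"
  proof -
    have "card C \<ge> 1" using l by (simp add: Suc_le_eq card_gt_0_iff) blast
    then show ?thesis using l by (simp add: card_Diff_singleton of_nat_diff)
  qed
  finally show ?thesis by (simp add: aa_diag)
qed

lemma sum_aa_out:
  assumes j0: "j0 \<in> C" "\<not> E k j0"
  shows "(\<Sum>j\<in>C. aa k j) \<le> real (card C) - 1"
proof -
  have "(\<Sum>j\<in>C. aa k j) = aa k j0 + (\<Sum>j\<in>C - {j0}. aa k j)" using j0 by (simp add: sum.remove)
  also have "(\<Sum>j\<in>C - {j0}. aa k j) \<le> (\<Sum>j\<in>C - {j0}. 1)"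
    by (intro sum_mono aa_le1)
  also have "\<dots> = real (card C) - 1"
  proof -
    have "card C \<ge> 1" using j0 by (simp add: Suc_le_eq card_gt_0_iff) blast
    then show ?thesis using j0 by (simp add: card_Diff_singleton of_nat_diff)
  qed
  finally show ?thesis using j0 by (simp add: aa_def)
qed

lemma quad_bound:
  assumes cl: "is_clique E C"
  shows "d \<bullet> (adj_matrix E *v d) + d \<bullet> d \<le>
     (\<Sum>l\<in>UNIV. if l \<in> C then d$l else 0)^2
     + 2 * (\<Sum>l\<in>UNIV. if l \<in> C then 0 else \<bar>d$l\<bar>) * (\<Sum>l\<in>UNIV. \<bar>d$l\<bar>)"
proof -
  define dc where "dc l = (if l \<in> C then d$l else 0)" for l
  define do where "do l = (if l \<in> C then 0 else \<bar>d$l\<bar>)" for l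
  have pw: "d$i * aa i j * d$j + (if i = j then d$i * d$j else 0) \<le> dc i * dc j + do i * \<bar>d$j\<bar> + \<bar>d$i\<bar> * do j" for i j
  proof (cases "i \<in> C \<and> j \<in> C")
    case True
    then show ?thesis using cl aa_diag by (auto simp: dc_def do_def aa_def is_clique_def)
  next
    case False
    have c: "0 \<le> aa i j + (if i = j then 1 else 0)" "aa i j + (if i = j then 1 else 0) \<le> 1"
      using aa_diag[of i] aa_le1[of i j] aa_ge0[of i j] by auto
    have "d$i * aa i j * d$j + (if i = j then d$i * d$j else 0) = (aa i j + (if i = j then 1 else 0)) * (d$i * d$j)"
      by (simp add: algebra_simps)
    also have "\<dots> \<le> (aa i j + (if i = j then 1 else 0)) * \<bar>d$i * d$j\<bar>"
      using c by (intro mult_left_mono) auto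
    also have "\<dots> \<le> 1 * \<bar>d$i * d$j\<bar>" using c by (intro mult_right_mono) auto
    also have "\<dots> \<le> dc i * dc j + do i * \<bar>d$j\<bar> + \<bar>d$i\<bar> * do j"
      using False by (auto simp: dc_def do_def abs_mult)
    finally show ?thesis .
  qed
  have "d \<bullet> (adj_matrix E *v d) + d \<bullet> d = (\<Sum>i\<in>UNIV. \<Sum>j\<in>UNIV. d$i * aa i j * d$j + (if i = j then d$i * d$j else 0))"
    by (simp add: quad_sum inner_self_sum sum.distrib)
  also have "\<dots> \<le> (\<Sum>i\<in>UNIV. \<Sum>j\<in>UNIV. dc i * dc j + do i * \<bar>d$j\<bar> + \<bar>d$i\<bar> * do j)"
    by (intro sum_mono pw)
  also have "\<dots> = (\<Sum>l\<in>UNIV. dc l)^2 + 2 * (\<Sum>l\<in>UNIV. do l) * (\<Sum>l\<in>UNIV. \<bar>d$l\<bar>)"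
  proof -
    have "(\<Sum>i\<in>UNIV. \<Sum>j\<in>UNIV. dc i * dc j + do i * \<bar>d$j\<bar> + \<bar>d$i\<bar> * do j)
       = (\<Sum>i\<in>UNIV. \<Sum>j\<in>UNIV. dc i * dc j) + (\<Sum>i\<in>UNIV. \<Sum>j\<in>UNIV. do i * \<bar>d$j\<bar>)
         + (\<Sum>i\<in>UNIV. \<Sum>j\<in>UNIV. \<bar>d$i\<bar> * do j)"
      by (simp add: sum.distrib)
    also have "\<dots> = (\<Sum>l\<in>UNIV. dc l) * (\<Sum>l\<in>UNIV. dc l) + (\<Sum>l\<in>UNIV. do l) * (\<Sum>l\<in>UNIV. \<bar>d$l\<bar>)
         + (\<Sum>l\<in>UNIV. \<bar>d$l\<bar>) * (\<Sum>l\<in>UNIV. do l)"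
      by (simp only: sum_product)
    finally show ?thesis by (simp add: power2_eq_square algebra_simps)
  qed
  finally show ?thesis by (simp add: dc_def do_def)
qed

lemma dirB:
  assumes mc: "maximal_clique E C"
  shows "strict_local_max_on ff std_simplex (clique_vec C)"
proof -
  define x where "x = clique_vec C"
  have C: "C \<noteq> {}" using maxcl_ne[OF mc] .
  have cl: "is_clique E C" using mc by (simp add: maximal_clique_def)
  have x: "x \<in> std_simplex" using cv_simplex[OF C] by (simp add: x_def)
  define N where "N = real (card C)"
  have N: "N > 0" using C by (simp add: N_def card_gt_0_iff)
  obtain i0 where i0: "i0 \<in> C" using C by blast
  define lam where "lam = gf x $ i0"
  have gfn: "gf x $ l = 2 * ((\<Sum>j\<in>C. aa l j) / N) + grad x $ l" for l
    by (simp add: gf_def x_def Ax_nth N_def)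
  have gin: "gf x $ l = lam" if l: "l \<in> C" for l
    unfolding lam_def gfn sum_aa_in[OF cl l] sum_aa_in[OF cl i0]
    using grad_sym[OF C l i0] by (simp add: x_def)
  have gout: "gf x $ k < lam" if k: "k \<notin> C" for k
  proof -
    obtain j0 where j0: "j0 \<in> C" "\<not> E k j0"
    proof (rule ccontr)
      assume "\<not> thesis"
      then have allE: "\<forall>j\<in>C. E k j" using that by blast
      have "is_clique E (insert k C)"
        using cl allE graph by (auto simp: is_clique_def simple_graph_def)
      moreover have "C \<subset> insert k C" using k by blast
      ultimately show False using mc by (auto simp: maximal_clique_def)
    qed
    have "(\<Sum>j\<in>C. aa k j) \<le> (\<Sum>j\<in>C. aa i0 j)"
      using sum_aa_out[OF j0] sum_aa_in[OF cl i0] by simp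
    then have "2 * ((\<Sum>j\<in>C. aa k j) / N) \<le> 2 * ((\<Sum>j\<in>C. aa i0 j) / N)"
      using N by (simp add: divide_right_mono)
    moreover have "grad x $ k < grad x $ i0" using grad_out[OF C i0 k] by (simp add: x_def)
    ultimately show ?thesis unfolding lam_def gfn by simp
  qed
  define \<delta> where "\<delta> = Min (insert 1 ((\<lambda>k. lam - gf x $ k) ` (- C)))"
  have \<delta>0: "\<delta> > 0" using gout by (simp add: \<delta>_def)
  have \<delta>le: "gf x $ k \<le> lam - \<delta>" if "k \<notin> C" for k
  proof -
    have "\<delta> \<le> lam - gf x $ k" unfolding \<delta>_def by (rule Min_le) (use that in auto)
    then show ?thesis by simp
  qed
  define M where "M = real CARD('n)"
  have M: "M > 0" by (simp add: M_def)
  define \<epsilon> where "\<epsilon> = \<delta> / (3 * M)"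
  have \<epsilon>: "\<epsilon> > 0" using \<delta>0 M by (simp add: \<epsilon>_def)
  have xo: "x$l = 0" if "l \<notin> C" for l using that by (simp add: x_def cv_nth)
  have main: "ff y < ff x" if y: "y \<in> std_simplex" and ny: "0 < norm (y - x)" "norm (y - x) < \<epsilon>" for y
  proof -
    define d where "d = y - x"
    define s where "s = (\<Sum>l\<in>UNIV. if l \<in> C then 0 else \<bar>d$l\<bar>)"
    define T where "T = (\<Sum>l\<in>UNIV. \<bar>d$l\<bar>)"
    have dout: "d$l = y$l" "0 \<le> d$l" if "l \<notin> C" for l
      using that xo simplex_nonneg[OF y] by (auto simp: d_def)
    have sd: "(\<Sum>l\<in>UNIV. d$l) = 0" using simplex_diff_sum[OF x y] by (simp add: d_def)
    have s0: "0 \<le> s" by (simp add: s_def sum_nonneg)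
    have h1: "gf x \<bullet> d \<le> - \<delta> * s"
    proof -
      have "gf x \<bullet> d = (\<Sum>l\<in>UNIV. gf x $ l * d $ l)" by (simp add: inner_vec_def)
      also have "\<dots> \<le> (\<Sum>l\<in>UNIV. lam * d$l - \<delta> * (if l \<in> C then 0 else \<bar>d$l\<bar>))"
      proof (rule sum_mono)
        fix l
        show "gf x $ l * d $ l \<le> lam * d$l - \<delta> * (if l \<in> C then 0 else \<bar>d$l\<bar>)"
        proof (cases "l \<in> C")
          case True then show ?thesis using gin by simp
        next
          case False
          have "gf x $ l * d $ l \<le> (lam - \<delta>) * d$l" using \<delta>le[OF False] dout[OF False]
            by (intro mult_right_mono) auto
          then show ?thesis using False dout[OF False] by (simp add: algebra_simps)
        qed
      qed
      also have "\<dots> = - \<delta> * s"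
        by (simp add: sum_subtractf sum_distrib_left[symmetric] sd s_def)
      finally show ?thesis .
    qed
    have h2: "(\<Sum>l\<in>UNIV. if l \<in> C then d$l else 0) = - s"
    proof -
      have "(\<Sum>l\<in>UNIV. d$l) = (\<Sum>l\<in>UNIV. (if l \<in> C then d$l else 0) + (if l \<in> C then 0 else \<bar>d$l\<bar>))"
        using dout(2) by (intro sum.cong refl) (simp add: abs_of_nonneg)
      then show ?thesis using sd by (simp add: sum.distrib s_def)
    qed
    have h3: "T \<le> M * norm d"
      unfolding T_def M_def using sum_bounded_above[of UNIV "\<lambda>l. \<bar>d$l\<bar>" "norm d"]
      by (simp add: component_le_norm_cart)
    have h4: "s \<le> T" unfolding s_def T_def by (intro sum_mono) auto
    have yx: "y \<noteq> x" using ny by auto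
    have h5: "\<Phi> y - \<Phi> x - grad x \<bullet> d < d \<bullet> d" using P2[OF x y yx] by (simp add: d_def)
    have h6: "d \<bullet> (adj_matrix E *v d) + d \<bullet> d \<le> s^2 + 2 * s * T"
      using quad_bound[OF cl, of d] h2 unfolding s_def T_def by simp
    have ex: "ff y = ff x + gf x \<bullet> d + d \<bullet> (adj_matrix E *v d) + (\<Phi> y - \<Phi> x - grad x \<bullet> d)"
      using expand[of y x] by (simp add: d_def)
    have a1: "ff y < ff x - \<delta> * s + s^2 + 2 * s * T" using ex h1 h5 h6 by linarith
    have a2: "s^2 + 2 * s * T \<le> s * (3 * T)" using h4 s0
      by (simp add: power2_eq_square algebra_simps mult_right_mono)
    have a3: "3 * T < \<delta>"
    proof -
      have "3 * T \<le> 3 * (M * norm d)" using h3 by simp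
      also have "\<dots> < 3 * (M * \<epsilon>)" using ny M by (simp add: d_def)
      also have "\<dots> = \<delta>" using M by (simp add: \<epsilon>_def)
      finally show ?thesis .
    qed
    have a4: "s * (3 * T) \<le> s * \<delta>" using s0 a3 by (intro mult_left_mono) auto
    from a1 a2 a4 show ?thesis by (simp add: algebra_simps)
  qed
  show ?thesis unfolding strict_local_max_on_def x_def[symmetric]
    using x \<epsilon> main by blast
qed

end

theorem proposition5:
  fixes E :: "'n::finite \<Rightarrow> 'n \<Rightarrow> bool"
    and \<Phi> :: "real^'n \<Rightarrow> real"
    and X :: "(real^'n) set"
    and grad :: "real^'n \<Rightarrow> real^'n"
    and hess :: "real^'n \<Rightarrow> real^'n^'n"
  assumes graph: "simple_graph E"
    and X_open: "open X" and X_sup: "std_simplex \<subseteq> X"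
    and grad: "\<And>x. x \<in> X \<Longrightarrow> (\<Phi> has_derivative (\<lambda>h. grad x \<bullet> h)) (at x)"
    and hess: "\<And>x. x \<in> X \<Longrightarrow> (grad has_derivative (\<lambda>h. hess x *v h)) (at x)"
    and hess_cont: "continuous_on X hess"
    and C1: "\<And>x v. x \<in> std_simplex \<Longrightarrow> v \<bullet> (hess x *v v) \<ge> 0"
    and C2: "\<And>x. x \<in> std_simplex \<Longrightarrow> onorm (\<lambda>v. hess x *v v) < 2"
    and C3: "\<And>x \<sigma>. x \<in> std_simplex \<Longrightarrow> \<sigma> permutes (UNIV :: 'n set) \<Longrightarrow>
               \<Phi> (perm_vec \<sigma> x) = \<Phi> x"
    and posdef: "\<And>x v. x \<in> std_simplex \<Longrightarrow> v \<noteq> 0 \<Longrightarrow> v \<bullet> (hess x *v v) > 0"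
  defines "f \<equiv> (\<lambda>x. x \<bullet> (adj_matrix E *v x) + \<Phi> x)"
  shows "(\<forall>x\<in>std_simplex. local_max_on f std_simplex x \<longleftrightarrow>
            (\<exists>C. maximal_clique E C \<and> x = clique_vec C))
         \<and> (\<forall>x. local_max_on f std_simplex x \<longrightarrow> strict_local_max_on f std_simplex x)"
proof -
  interpret P: P5 E \<Phi> X grad hess
    by (unfold_locales) (use graph X_sup grad hess C2 C3 posdef in auto)
  have feq: "f = P.ff" by (simp add: f_def fun_eq_iff P.ff_def)
  have sl: "local_max_on f std_simplex x" if "strict_local_max_on f std_simplex x" for x
    using that unfolding local_max_on_def strict_local_max_on_def by (meson less_imp_le)
  show ?thesis
  proof (intro conjI ballI allI impI iffI)
    fix x assume "local_max_on f std_simplex x"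
    then show "\<exists>C. maximal_clique E C \<and> x = clique_vec C" using P.dirA by (simp add: feq)
  next
    fix x assume "\<exists>C. maximal_clique E C \<and> x = clique_vec C"
    then show "local_max_on f std_simplex x" using P.dirB sl by (auto simp: feq)
  next
    fix x assume "local_max_on f std_simplex x"
    then show "strict_local_max_on f std_simplex x" using P.dirA P.dirB by (auto simp: feq)
  qed
qed

end
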